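(* Let $(X_B,X_C,X_R)$ be an OCC of a graph $G$, let $f_X$ be a proper $2$-coloring of $G[X_B]$, let $B^\ast \subseteq X_B$ satisfy property $(\star)$, and let $G'$ be the reduced graph. Let $Y \subseteq V(G) \cap V(G')$ be arbitrary. Then there is a closed walk of odd length $F$ in $G$ with $V(F) \cap V(G) \cap V(G') = Y$ if and only if there is a closed walk of odd length $F'$ in $G'$ with $V(F') \cap V(G) \cap V(G') = Y$.
   Context: An odd cycle cut (OCC) of $G$ is a partition $(X_B, X_C, X_R)$ of $V(G)$ such that $G[X_B]$ is bipartite, there is no edge between $X_B$ and $X_R$, and $X_B \cup X_C \neq \emptyset$. Auxiliary graph: $G_{\mathrm{aux}}$ is obtained from a copy of $G[X_B]$ by adding, for each $v \in X_C$, new vertices $v^{(0)}, v^{(1)}$ and, for each $u \in N_G(v) \cap X_B$, the edge $v^{(f_X(u))}u$; $T := \{v^{(i)} : v \in X_C, i \in \{0,1\}\}$. Property $(\star)$ of $B^\ast \subseteq X_B$: for every partition $(T_1,T_2,T_3,T_X)$ of $T$ into four possibly empty parts, if there exists $S \subseteq X_B$ with $|S| \le |T|$ separating $T_i$ and $T_j$ (no connected component of $G_{\mathrm{aux}} - T_X - S$ meets both) for all $1 \le i < j \le 3$, then $B^\ast$ contains such a set $S$ of minimum possible size. Reduced graph $G'$: start from $G - (X_B \setminus B^\ast)$; then, for every unordered pair $\{u,v\}$ of (not necessarily distinct) vertices of $X_C \cup B^\ast$ and every parity $p \in \{\text{even},\text{odd}\}$ such that $G$ contains a $(u,v)$-walk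 of length of parity $p$ that has at least one internal vertex and all of whose internal vertices lie in $X_B \setminus B^\ast$: if $p$ is even, add two new vertices $x, x'$, each adjacent to exactly $u$ and $v$; if $p$ is odd, add four new vertices $x,y,x',y'$ and the edges $ux, xy, yv, ux', x'y', y'v$. All added vertices are distinct and new. Thus $V(G) \cap V(G') = V(G) \setminus (X_B \setminus B^\ast)$. *)

theory Defs
  imports Main "HOL-Library.Uprod"
begin

definition simple_graph :: "'a set \<Rightarrow> ('a \<Rightarrow> 'a \<Rightarrow> bool) \<Rightarrow> bool" where
  "simple_graph V E \<longleftrightarrow> finite V \<and> (\<forall>u w. E u w \<longrightarrow> u \<in> V \<and> w \<in> V \<and> u \<noteq> w \<and> E w u)"

definition is_walk :: "'a set \<Rightarrow> ('a \<Rightarrow> 'a \<Rightarrow> bool) \<Rightarrow> 'a list \<Rightarrow> bool" where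
  "is_walk V E xs \<longleftrightarrow> xs \<noteq> [] \<and> set xs \<subseteq> V \<and> successively E xs"

definition walk_length :: "'a list \<Rightarrow> nat" where
  "walk_length xs = length xs - 1"

definition closed_odd_walk :: "'a set \<Rightarrow> ('a \<Rightarrow> 'a \<Rightarrow> bool) \<Rightarrow> 'a list \<Rightarrow> bool" where
  "closed_odd_walk V E xs \<longleftrightarrow> is_walk V E xs \<and> hd xs = last xs \<and> odd (walk_length xs)"

definition proper_2col :: "('a \<Rightarrow> 'a \<Rightarrow> bool) \<Rightarrow> 'a set \<Rightarrow> ('a \<Rightarrow> bool) \<Rightarrow> bool" where
  "proper_2col E A f \<longleftrightarrow> (\<forall>u\<in>A. \<forall>w\<in>A. E u w \<longrightarrow> f u \<noteq> f w)"

definition bipartite_on :: "('a \<Rightarrow> 'a \<Rightarrow> bool) \<Rightarrow> 'a set \<Rightarrow> bool" where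
  "bipartite_on E A \<longleftrightarrow> (\<exists>f :: 'a \<Rightarrow> bool. proper_2col E A f)"

definition is_OCC :: "'a set \<Rightarrow> ('a \<Rightarrow> 'a \<Rightarrow> bool) \<Rightarrow> 'a set \<Rightarrow> 'a set \<Rightarrow> 'a set \<Rightarrow> bool" where
  "is_OCC V E XB XC XR \<longleftrightarrow>
     XB \<union> XC \<union> XR = V \<and> XB \<inter> XC = {} \<and> XB \<inter> XR = {} \<and> XC \<inter> XR = {} \<and>
     bipartite_on E XB \<and> (\<forall>u\<in>XB. \<forall>w\<in>XR. \<not> E u w) \<and> XB \<union> XC \<noteq> {}"

text \<open>Vertices of G_aux: Inl u for u in XB (copy of G[XB]); Inr (v,i) is v^(i) for v in XC,
  with colour i :: bool (False = 0, True = 1).\<close>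
definition aux_V :: "'a set \<Rightarrow> 'a set \<Rightarrow> ('a + 'a \<times> bool) set" where
  "aux_V XB XC = Inl ` XB \<union> Inr ` (XC \<times> UNIV)"

definition aux_T :: "'a set \<Rightarrow> ('a + 'a \<times> bool) set" where
  "aux_T XC = Inr ` (XC \<times> UNIV)"

fun aux_base :: "('a \<Rightarrow> 'a \<Rightarrow> bool) \<Rightarrow> 'a set \<Rightarrow> 'a set \<Rightarrow> ('a \<Rightarrow> bool)
    \<Rightarrow> ('a + 'a \<times> bool) \<Rightarrow> ('a + 'a \<times> bool) \<Rightarrow> bool" where
  "aux_base E XB XC f (Inl u) (Inl w) = (u \<in> XB \<and> w \<in> XB \<and> E u w)"
| "aux_base E XB XC f (Inr (v, i)) (Inl u) = (v \<in> XC \<and> u \<in> XB \<and> E v u \<and> i = f u)"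
| "aux_base E XB XC f _ _ = False"

definition aux_E :: "('a \<Rightarrow> 'a \<Rightarrow> bool) \<Rightarrow> 'a set \<Rightarrow> 'a set \<Rightarrow> ('a \<Rightarrow> bool)
    \<Rightarrow> ('a + 'a \<times> bool) \<Rightarrow> ('a + 'a \<times> bool) \<Rightarrow> bool" where
  "aux_E E XB XC f x y \<longleftrightarrow> aux_base E XB XC f x y \<or> aux_base E XB XC f y x"

definition connected_in :: "'b set \<Rightarrow> ('b \<Rightarrow> 'b \<Rightarrow> bool) \<Rightarrow> 'b \<Rightarrow> 'b \<Rightarrow> bool" where
  "connected_in W R a b \<longleftrightarrow> a \<in> W \<and> b \<in> W \<and> (\<lambda>x y. R x y \<and> x \<in> W \<and> y \<in> W)\<^sup>*\<^sup>* a b"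

definition aux_separates :: "('a \<Rightarrow> 'a \<Rightarrow> bool) \<Rightarrow> 'a set \<Rightarrow> 'a set \<Rightarrow> ('a \<Rightarrow> bool)
    \<Rightarrow> ('a + 'a \<times> bool) set \<Rightarrow> 'a set \<Rightarrow> ('a + 'a \<times> bool) set \<Rightarrow> ('a + 'a \<times> bool) set \<Rightarrow> bool" where
  "aux_separates E XB XC f TX S A B \<longleftrightarrow>
     \<not> (\<exists>a\<in>A. \<exists>b\<in>B. connected_in (aux_V XB XC - TX - Inl ` S) (aux_E E XB XC f) a b)"

definition aux_sep3 :: "('a \<Rightarrow> 'a \<Rightarrow> bool) \<Rightarrow> 'a set \<Rightarrow> 'a set \<Rightarrow> ('a \<Rightarrow> bool)
    \<Rightarrow> ('a + 'a \<times> bool) set \<Rightarrow> ('a + 'a \<times> bool) set \<Rightarrow> ('a + 'a \<times> bool) set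
    \<Rightarrow> ('a + 'a \<times> bool) set \<Rightarrow> 'a set \<Rightarrow> bool" where
  "aux_sep3 E XB XC f T1 T2 T3 TX S \<longleftrightarrow>
     aux_separates E XB XC f TX S T1 T2 \<and> aux_separates E XB XC f TX S T1 T3 \<and>
     aux_separates E XB XC f TX S T2 T3"

definition star_prop :: "('a \<Rightarrow> 'a \<Rightarrow> bool) \<Rightarrow> 'a set \<Rightarrow> 'a set \<Rightarrow> ('a \<Rightarrow> bool) \<Rightarrow> 'a set \<Rightarrow> bool" where
  "star_prop E XB XC f Bs \<longleftrightarrow>
     (\<forall>T1 T2 T3 TX.
        T1 \<union> T2 \<union> T3 \<union> TX = aux_T XC \<and>
        T1 \<inter> T2 = {} \<and> T1 \<inter> T3 = {} \<and> T1 \<inter> TX = {} \<and>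
        T2 \<inter> T3 = {} \<and> T2 \<inter> TX = {} \<and> T3 \<inter> TX = {} \<and>
        (\<exists>S. S \<subseteq> XB \<and> card S \<le> card (aux_T XC) \<and> aux_sep3 E XB XC f T1 T2 T3 TX S)
      \<longrightarrow> (\<exists>S. S \<subseteq> Bs \<and> aux_sep3 E XB XC f T1 T2 T3 TX S \<and>
              (\<forall>S'. S' \<subseteq> XB \<and> aux_sep3 E XB XC f T1 T2 T3 TX S' \<longrightarrow> card S \<le> card S')))"

text \<open>Vertices of G': Old v for surviving vertices of G; New P odd c k for the added vertices
  belonging to the unordered pair P and parity odd (True = odd). Even gadget: New P False c 0,
  c \<in> {0,1} (the vertices x, x'). Odd gadget: New P True c 0 and New P True c 1 are x,y (c = 0)
  resp. x',y' (c = 1), where x is attached to the first and y to the second component of a fixed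
  ordered representative of P.\<close>
datatype 'a rvert = Old 'a | New "'a uprod" bool nat nat

definition has_inner_walk :: "('a \<Rightarrow> 'a \<Rightarrow> bool) \<Rightarrow> 'a set \<Rightarrow> 'a \<Rightarrow> 'a \<Rightarrow> bool \<Rightarrow> bool" where
  "has_inner_walk E I u v podd \<longleftrightarrow>
     (\<exists>ws. ws \<noteq> [] \<and> set ws \<subseteq> I \<and> successively E (u # ws @ [v]) \<and>
          odd (walk_length (u # ws @ [v])) = podd)"

definition gadget :: "('a \<Rightarrow> 'a \<Rightarrow> bool) \<Rightarrow> 'a set \<Rightarrow> 'a set \<Rightarrow> 'a set \<Rightarrow> 'a uprod \<Rightarrow> bool \<Rightarrow> bool" where
  "gadget E XB XC Bs P podd \<longleftrightarrow>
     (\<exists>u v. P = Upair u v \<and> u \<in> XC \<union> Bs \<and> v \<in> XC \<union> Bs \<and> has_inner_walk E (XB - Bs) u v podd)"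

definition rep :: "'a uprod \<Rightarrow> 'a \<times> 'a" where
  "rep P = (SOME (a, b). P = Upair a b)"

definition red_V :: "'a set \<Rightarrow> ('a \<Rightarrow> 'a \<Rightarrow> bool) \<Rightarrow> 'a set \<Rightarrow> 'a set \<Rightarrow> 'a set \<Rightarrow> 'a rvert set" where
  "red_V V E XB XC Bs =
     Old ` (V - (XB - Bs)) \<union>
     {New P False c 0 | P c. gadget E XB XC Bs P False \<and> c < 2} \<union>
     {New P True c k | P c k. gadget E XB XC Bs P True \<and> c < 2 \<and> k < 2}"

fun red_base :: "'a set \<Rightarrow> ('a \<Rightarrow> 'a \<Rightarrow> bool) \<Rightarrow> 'a set \<Rightarrow> 'a set \<Rightarrow> 'a set
    \<Rightarrow> 'a rvert \<Rightarrow> 'a rvert \<Rightarrow> bool" where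
  "red_base V E XB XC Bs (Old a) (Old b) = (a \<in> V - (XB - Bs) \<and> b \<in> V - (XB - Bs) \<and> E a b)"
| "red_base V E XB XC Bs (New P False c k) (Old a) =
     (gadget E XB XC Bs P False \<and> c < 2 \<and> k = 0 \<and> (a = fst (rep P) \<or> a = snd (rep P)))"
| "red_base V E XB XC Bs (New P True c k) (Old a) =
     (gadget E XB XC Bs P True \<and> c < 2 \<and>
      ((k = 0 \<and> a = fst (rep P)) \<or> (k = 1 \<and> a = snd (rep P))))"
| "red_base V E XB XC Bs (New P True c k) (New Q True d l) =
     (gadget E XB XC Bs P True \<and> Q = P \<and> c < 2 \<and> d = c \<and> k = 0 \<and> l = 1)"
| "red_base V E XB XC Bs _ _ = False"

definition red_E :: "'a set \<Rightarrow> ('a \<Rightarrow> 'a \<Rightarrow> bool) \<Rightarrow> 'a set \<Rightarrow> 'a set \<Rightarrow> 'a set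
    \<Rightarrow> 'a rvert \<Rightarrow> 'a rvert \<Rightarrow> bool" where
  "red_E V E XB XC Bs x y \<longleftrightarrow> red_base V E XB XC Bs x y \<or> red_base V E XB XC Bs y x"

end

theory Submission
  imports Defs
begin


inductive wk :: "'v set \<Rightarrow> ('v \<Rightarrow> 'v \<Rightarrow> bool) \<Rightarrow> 'v \<Rightarrow> 'v \<Rightarrow> bool \<Rightarrow> 'v set \<Rightarrow> bool"
  for V E where
  w0: "a \<in> V \<Longrightarrow> wk V E a a False {a}"
| wS: "wk V E a b p S \<Longrightarrow> E b c \<Longrightarrow> c \<in> V \<Longrightarrow> wk V E a c (\<not> p) (insert c S)"

lemma wk_ends: "wk V E a b p S \<Longrightarrow> a \<in> S \<and> b \<in> S \<and> S \<subseteq> V"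
  by (induction rule: wk.induct) auto

lemma walk_to_wk: "is_walk V E xs \<Longrightarrow> wk V E (hd xs) (last xs) (odd (walk_length xs)) (set xs)"
proof (induction xs rule: rev_induct)
  case Nil
  then show ?case by (simp add: is_walk_def)
next
  case (snoc x xs)
  show ?case
  proof (cases "xs = []")
    case True
    then show ?thesis using snoc.prems by (auto simp: is_walk_def walk_length_def intro: w0)
  next
    case False
    have iw: "is_walk V E xs" using snoc.prems False
      by (auto simp: is_walk_def successively_append_iff)
    have e: "E (last xs) x" using snoc.prems False
      by (auto simp: is_walk_def successively_append_iff)
    have xV: "x \<in> V" using snoc.prems by (auto simp: is_walk_def)
    from wS[OF snoc.IH[OF iw] e xV] False show ?thesis
      by (auto simp: walk_length_def hd_append)
  qed
qed

lemma wk_to_walk: "wk V E a b p S \<Longrightarrow> \<exists>xs. is_walk V E xs \<and> hd xs = a \<and> last xs = b \<and> odd (walk_length xs) = p \<and> set xs = S"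
proof (induction rule: wk.induct)
  case (w0 a)
  then show ?case by (intro exI[of _ "[a]"]) (auto simp: is_walk_def walk_length_def)
next
  case (wS a b p S c)
  then obtain xs where xs: "is_walk V E xs" "hd xs = a" "last xs = b" "odd (walk_length xs) = p" "set xs = S" by blast
  have "xs \<noteq> []" using xs by (auto simp: is_walk_def)
  then show ?case using xs wS.hyps
    by (intro exI[of _ "xs @ [c]"]) (auto simp: is_walk_def walk_length_def successively_append_iff hd_append)
qed

lemma wk_concat: "wk V E b c q T \<Longrightarrow> wk V E a b p S \<Longrightarrow> wk V E a c (p \<noteq> q) (S \<union> T)"
proof (induction rule: wk.induct)
  case (w0 a)
  then show ?case using wk_ends[OF w0(2)] by (simp add: insert_absorb)
next
  case (wS b c' q T d)
  from wk.wS[OF wS.IH[OF wS.prems] wS.hyps(2,3)] show ?case by simp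
qed

lemma wk_split: "wk V E a b p S \<Longrightarrow> k \<in> S \<Longrightarrow>
  \<exists>p1 p2 S1 S2. wk V E a k p1 S1 \<and> wk V E k b p2 S2 \<and> S1 \<union> S2 = S \<and> p = (p1 \<noteq> p2)"
proof (induction rule: wk.induct)
  case (w0 a)
  then show ?case by (intro exI[of _ False] exI[of _ False] exI[of _ "{a}"]) (auto intro: wk.w0)
next
  case (wS a b p S c)
  show ?case
  proof (cases "k = c")
    case True
    have "wk V E a c (\<not> p) (insert c S)" by (rule wk.wS[OF wS.hyps])
    moreover have "wk V E c c False {c}" by (rule w0) (fact wS.hyps(3))
    ultimately show ?thesis using True by (intro exI[of _ "\<not> p"] exI[of _ False]) auto
  next
    case False
    then have "k \<in> S" using wS.prems by auto
    then obtain p1 p2 S1 S2 where h: "wk V E a k p1 S1" "wk V E k b p2 S2" "S1 \<union> S2 = S" "p = (p1 \<noteq> p2)"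
      using wS.IH by blast
    have "wk V E k c (\<not> p2) (insert c S2)" by (rule wk.wS[OF h(2) wS.hyps(2,3)])
    then show ?thesis using h by (intro exI[of _ p1] exI[of _ "\<not> p2"]) auto
  qed
qed

lemma wk_color: fixes f :: "'v \<Rightarrow> bool" shows "wk V E a b p S \<Longrightarrow> (\<forall>x\<in>S. \<forall>y\<in>S. E x y \<longrightarrow> f x \<noteq> f y) \<Longrightarrow> p = (f a \<noteq> f b)"
proof (induction rule: wk.induct)
  case (w0 a)
  then show ?case by simp
next
  case (wS a b p S c)
  have "b \<in> S" using wk_ends[OF wS.hyps(1)] by simp
  then have "f b \<noteq> f c" using wS.prems wS.hyps(2) by auto
  moreover have "p = (f a \<noteq> f b)" using wS.IH wS.prems by auto
  ultimately show ?case by auto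
qed

lemma wk_rotate: "wk V E a a True S \<Longrightarrow> k \<in> S \<Longrightarrow> wk V E k k True S"
proof -
  assume a: "wk V E a a True S" "k \<in> S"
  from wk_split[OF a] obtain p1 p2 S1 S2 where h: "wk V E a k p1 S1" "wk V E k a p2 S2" "S1 \<union> S2 = S" "True = (p1 \<noteq> p2)"
    by blast
  from wk_concat[OF h(1) h(2)] h(3,4) show ?thesis by (metis sup_commute)
qed

lemma cow_iff: "(\<exists>F. closed_odd_walk V E F \<and> P (set F)) \<longleftrightarrow> (\<exists>a S. wk V E a a True S \<and> P S)"
proof
  assume "\<exists>F. closed_odd_walk V E F \<and> P (set F)"
  then obtain F where "closed_odd_walk V E F" "P (set F)" by blast
  then show "\<exists>a S. wk V E a a True S \<and> P S"
    using walk_to_wk[of V E F] by (auto simp: closed_odd_walk_def)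
next
  assume "\<exists>a S. wk V E a a True S \<and> P S"
  then obtain a S where "wk V E a a True S" "P S" by blast
  then show "\<exists>F. closed_odd_walk V E F \<and> P (set F)"
    using wk_to_walk[of V E a a True S] by (auto simp: closed_odd_walk_def)
qed



locale setting =
  fixes V :: "'a set" and E XB XC XR Bs fX
  assumes sg: "simple_graph V E" and occ: "is_OCC V E XB XC XR"
    and col: "proper_2col E XB fX" and BsXB: "Bs \<subseteq> XB"
begin

abbreviation "K \<equiv> V - (XB - Bs)"
abbreviation "V' \<equiv> red_V V E XB XC Bs"
abbreviation "E' \<equiv> red_E V E XB XC Bs"

lemma Esym: "E u w \<Longrightarrow> E w u \<and> u \<in> V \<and> w \<in> V \<and> u \<noteq> w"
  using sg by (auto simp: simple_graph_def)

lemma XCK: "XC \<union> Bs \<subseteq> K" "XB \<subseteq> V"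
  using occ BsXB by (auto simp: is_OCC_def)

lemma nbr: "E x y \<Longrightarrow> x \<in> XB - Bs \<Longrightarrow> y \<in> K \<Longrightarrow> y \<in> XC \<union> Bs"
  using occ Esym[of x y] by (auto simp: is_OCC_def)

lemma hiw_sym: "has_inner_walk E I u v p \<Longrightarrow> has_inner_walk E I v u p"
proof -
  assume "has_inner_walk E I u v p"
  then obtain ws where ws: "ws \<noteq> []" "set ws \<subseteq> I" "successively E (u # ws @ [v])"
    "odd (walk_length (u # ws @ [v])) = p" unfolding has_inner_walk_def by blast
  have "successively (\<lambda>x y. E y x) (u # ws @ [v])"
    using ws(3) by (rule successively_mono) (use Esym in blast)
  then have "successively E (rev (u # ws @ [v]))" unfolding successively_rev .
  moreover have "rev (u # ws @ [v]) = v # rev ws @ [u]" by simp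
  ultimately have "successively E (v # rev ws @ [u])" by metis
  then show ?thesis unfolding has_inner_walk_def using ws
    by (intro exI[of _ "rev ws"]) (auto simp: walk_length_def)
qed

lemma rep_cases: "P = Upair u v \<Longrightarrow> rep P = (u, v) \<or> rep P = (v, u)"
proof -
  assume P: "P = Upair u v"
  have "(\<lambda>(a, b). P = Upair a b) (u, v)" using P by simp
  then have "(\<lambda>(a, b). P = Upair a b) (rep P)" unfolding rep_def by (rule someI)
  then show ?thesis using P by (cases "rep P") auto
qed

lemma rep_ok: "gadget E XB XC Bs P pp \<Longrightarrow>
   fst (rep P) \<in> XC \<union> Bs \<and> snd (rep P) \<in> XC \<union> Bs \<and>
   has_inner_walk E (XB - Bs) (fst (rep P)) (snd (rep P)) pp"
proof -
  assume "gadget E XB XC Bs P pp"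
  then obtain u v where uv: "P = Upair u v" "u \<in> XC \<union> Bs" "v \<in> XC \<union> Bs" "has_inner_walk E (XB - Bs) u v pp"
    unfolding gadget_def by blast
  from rep_cases[OF uv(1)] show ?thesis using uv hiw_sym by auto
qed

lemma hiw_wk: "has_inner_walk E (XB - Bs) u v pp \<Longrightarrow> u \<in> K \<Longrightarrow> v \<in> K \<Longrightarrow>
   \<exists>T. wk V E u v pp T \<and> T \<inter> K = {u, v}"
proof -
  assume a: "has_inner_walk E (XB - Bs) u v pp" "u \<in> K" "v \<in> K"
  then obtain ws where ws: "ws \<noteq> []" "set ws \<subseteq> XB - Bs" "successively E (u # ws @ [v])"
    "odd (walk_length (u # ws @ [v])) = pp" unfolding has_inner_walk_def by blast
  have "is_walk V E (u # ws @ [v])" using ws a XCK unfolding is_walk_def by auto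
  from walk_to_wk[OF this] ws a show ?thesis
    by (intro exI[of _ "set (u # ws @ [v])"]) auto
qed

lemma pair_walk: "has_inner_walk E (XB - Bs) u v pp \<Longrightarrow> u \<in> K \<Longrightarrow> v \<in> K \<Longrightarrow>
  (b = d \<and> b \<in> K \<and> q = False) \<or> (b = u \<and> d = v \<and> q = pp) \<or> (b = v \<and> d = u \<and> q = pp) \<Longrightarrow>
   \<exists>T. wk V E b d q T \<and> T \<inter> K = {b, d}"
proof -
  assume a: "has_inner_walk E (XB - Bs) u v pp" "u \<in> K" "v \<in> K"
    and c: "(b = d \<and> b \<in> K \<and> q = False) \<or> (b = u \<and> d = v \<and> q = pp) \<or> (b = v \<and> d = u \<and> q = pp)"
  show ?thesis
  proof (cases "b = d \<and> b \<in> K \<and> q = False")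
    case True
    then show ?thesis by (intro exI[of _ "{b}"]) (auto intro: w0)
  next
    case False
    then show ?thesis using c hiw_wk[OF a] hiw_wk[OF hiw_sym[OF a(1)] a(3) a(2)] by auto
  qed
qed

lemma Old_in_V': "Old x \<in> V' \<longleftrightarrow> x \<in> K"
  by (auto simp: red_V_def)

lemma gadget_wk': "gadget E XB XC Bs P pp \<Longrightarrow> P = Upair c d \<Longrightarrow> c \<in> K \<Longrightarrow> d \<in> K \<Longrightarrow>
  \<exists>T. wk V' E' (Old c) (Old d) pp T \<and> T \<inter> Old ` K = {Old c, Old d}"
proof -
  assume g: "gadget E XB XC Bs P pp" and P: "P = Upair c d" and cd: "c \<in> K" "d \<in> K"
  have c0: "wk V' E' (Old c) (Old c) False {Old c}" using cd by (intro w0) (simp add: Old_in_V')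
  show ?thesis
  proof (cases pp)
    case False
    have m: "New P False 0 0 \<in> V'" using g False by (auto simp: red_V_def)
    have "wk V' E' (Old c) (New P False 0 0) True {New P False 0 0, Old c}"
      using wS[OF c0 _ m] rep_cases[OF P] g False by (auto simp: red_E_def)
    from wS[OF this _ ] rep_cases[OF P] g False cd
    have "wk V' E' (Old c) (Old d) False {Old d, New P False 0 0, Old c}"
      by (auto simp: red_E_def Old_in_V')
    then show ?thesis using False cd by (intro exI[of _ "{Old d, New P False 0 0, Old c}"]) auto
  next
    case True
    have m: "New P True 0 k \<in> V'" if "k < 2" for k using g True that by (auto simp: red_V_def)
    from rep_cases[OF P] show ?thesis
    proof
      assume r: "rep P = (c, d)"
      have "wk V' E' (Old c) (New P True 0 0) True {New P True 0 0, Old c}"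
        using wS[OF c0 _ m] r g True by (auto simp: red_E_def)
      from wS[OF this _ m] r g True
      have "wk V' E' (Old c) (New P True 0 1) False {New P True 0 1, New P True 0 0, Old c}"
        by (auto simp: red_E_def)
      from wS[OF this _ ] r g True cd
      have "wk V' E' (Old c) (Old d) True {Old d, New P True 0 1, New P True 0 0, Old c}"
        by (auto simp: red_E_def Old_in_V')
      then show ?thesis using True cd by (intro exI[of _ "{Old d, New P True 0 1, New P True 0 0, Old c}"]) auto
    next
      assume r: "rep P = (d, c)"
      have "wk V' E' (Old c) (New P True 0 1) True {New P True 0 1, Old c}"
        using wS[OF c0 _ m] r g True by (auto simp: red_E_def)
      from wS[OF this _ m] r g True
      have "wk V' E' (Old c) (New P True 0 0) False {New P True 0 0, New P True 0 1, Old c}"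
        by (auto simp: red_E_def)
      from wS[OF this _ ] r g True cd
      have "wk V' E' (Old c) (Old d) True {Old d, New P True 0 0, New P True 0 1, Old c}"
        by (auto simp: red_E_def Old_in_V')
      then show ?thesis using True cd by (intro exI[of _ "{Old d, New P True 0 0, New P True 0 1, Old c}"]) auto
    qed
  qed
qed


lemma fwd: "wk V E a b p S \<Longrightarrow> a \<in> K \<Longrightarrow>
 (b \<in> K \<longrightarrow> (\<exists>S'. wk V' E' (Old a) (Old b) p S' \<and> S' \<inter> Old ` K = Old ` (S \<inter> K))) \<and>
 (b \<notin> K \<longrightarrow> (\<exists>c q S' ws. c \<in> XC \<union> Bs \<and> wk V' E' (Old a) (Old c) q S' \<and> S' \<inter> Old ` K = Old ` (S \<inter> K)
    \<and> ws \<noteq> [] \<and> set ws \<subseteq> XB - Bs \<and> successively E (c # ws) \<and> last ws = b \<and> p = (q \<noteq> odd (length ws))))"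
proof (induction rule: wk.induct)
  case (w0 a)
  then show ?case by (auto intro!: exI[of _ "{Old a}"] wk.w0 simp: Old_in_V')
next
  case (wS a b p S d)
  have bV: "b \<in> V" using wk_ends[OF wS.hyps(1)] by auto
  show ?case
  proof (cases "b \<in> K")
    case bK: True
    then obtain S' where S': "wk V' E' (Old a) (Old b) p S'" "S' \<inter> Old ` K = Old ` (S \<inter> K)"
      using wS.IH wS.prems by blast
    show ?thesis
    proof (cases "d \<in> K")
      case True
      have "E' (Old b) (Old d)" using bK True wS.hyps by (simp add: red_E_def)
      from wk.wS[OF S'(1) this] True have "wk V' E' (Old a) (Old d) (\<not> p) (insert (Old d) S')"
        by (simp add: Old_in_V')
      then show ?thesis using True S'(2) by (intro conjI impI exI[of _ "insert (Old d) S'"]) auto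
    next
      case False
      have dX: "d \<in> XB - Bs" using False wS.hyps by auto
      have "b \<in> XC \<union> Bs" using nbr[of d b] Esym[OF wS.hyps(2)] dX bK by auto
      then show ?thesis using False S' dX wS.hyps(2)
        by (intro conjI impI exI[of _ b] exI[of _ p] exI[of _ S'] exI[of _ "[d]"]) auto
    qed
  next
    case bK: False
    then obtain c q S' ws where h: "c \<in> XC \<union> Bs" "wk V' E' (Old a) (Old c) q S'" "S' \<inter> Old ` K = Old ` (S \<inter> K)"
      "ws \<noteq> []" "set ws \<subseteq> XB - Bs" "successively E (c # ws)" "last ws = b" "p = (q \<noteq> odd (length ws))"
      using wS.IH wS.prems by blast
    have sw: "successively E (c # ws @ [d])" using h(4,6,7) wS.hyps(2)
      by (simp add: successively_append_iff[of E "c # ws" "[d]", simplified])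
    have bX: "b \<in> XB - Bs" using bK bV by auto
    show ?thesis
    proof (cases "d \<in> K")
      case True
      have dC: "d \<in> XC \<union> Bs" using nbr[of b d] wS.hyps(2) bX True by auto
      have "has_inner_walk E (XB - Bs) c d (odd (length ws + 1))"
        unfolding has_inner_walk_def using h sw by (intro exI[of _ ws]) (auto simp: walk_length_def)
      then have g: "gadget E XB XC Bs (Upair c d) (odd (length ws + 1))"
        unfolding gadget_def using h(1) dC by blast
      have cK: "c \<in> K" "d \<in> K" using h(1) dC XCK by auto
      obtain T where T: "wk V' E' (Old c) (Old d) (odd (length ws + 1)) T" "T \<inter> Old ` K = {Old c, Old d}"
        using gadget_wk'[OF g refl cK] by blast
      have W: "wk V' E' (Old a) (Old d) (q \<noteq> odd (length ws + 1)) (S' \<union> T)" by (rule wk_concat[OF T(1) h(2)])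
      have "Old c \<in> S'" using wk_ends[OF h(2)] by auto
      then have oc: "Old c \<in> Old ` (S \<inter> K)" using h(3) cK by blast
      have e1: "(S' \<union> T) \<inter> Old ` K = Old ` (S \<inter> K) \<union> {Old c, Old d}"
        using h(3) T(2) by (simp add: Int_Un_distrib2)
      have e2: "Old ` (insert d S \<inter> K) = insert (Old d) (Old ` (S \<inter> K))" using True by simp
      have "(S' \<union> T) \<inter> Old ` K = Old ` (insert d S \<inter> K)" unfolding e1 e2 using oc by blast
      then show ?thesis using W True h(8) by (intro conjI impI exI[of _ "S' \<union> T"]) auto
    next
      case False
      then have "d \<in> XB - Bs" using wS.hyps by auto
      then show ?thesis using False h sw
        by (intro conjI impI exI[of _ c] exI[of _ q] exI[of _ S'] exI[of _ "ws @ [d]"]) auto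
    qed
  qed
qed

definition tail :: "'a \<Rightarrow> 'a rvert \<Rightarrow> bool \<Rightarrow> bool" where
  "tail b B r \<longleftrightarrow> (\<exists>P qq cc kk. B = New P qq cc kk \<and> gadget E XB XC Bs P qq \<and> kk < 2 \<and> cc < 2 \<and>
     (if qq then (b = fst (rep P) \<and> r = (kk = 0)) \<or> (b = snd (rep P) \<and> r = (kk = 1))
      else (b = fst (rep P) \<or> b = snd (rep P)) \<and> r \<and> kk = 0))"

lemma red_E_NN: "E' (New P1 q1 c1 k1) (New P2 q2 c2 k2) \<Longrightarrow>
  q1 \<and> q2 \<and> P1 = P2 \<and> c1 = c2 \<and> ((k1 = 0 \<and> k2 = 1) \<or> (k1 = 1 \<and> k2 = 0)) \<and> gadget E XB XC Bs P1 True"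
  unfolding red_E_def by (cases q1; cases q2) auto

lemma red_E_ON: "E' (Old b) (New P q c k) \<Longrightarrow> red_base V E XB XC Bs (New P q c k) (Old b)"
  unfolding red_E_def by (cases q) simp_all

lemma tail_start: "E' (Old b) (New P qq cc kk) \<Longrightarrow> tail b (New P qq cc kk) True"
proof -
  assume "E' (Old b) (New P qq cc kk)"
  then have h: "red_base V E XB XC Bs (New P qq cc kk) (Old b)" by (rule red_E_ON)
  show ?thesis
  proof (cases qq)
    case True
    then show ?thesis using h unfolding tail_def
      by (intro exI[of _ P] exI[of _ qq] exI[of _ cc] exI[of _ kk]) auto
  next
    case False
    then show ?thesis using h unfolding tail_def
      by (intro exI[of _ P] exI[of _ qq] exI[of _ cc] exI[of _ kk]) auto
  qed
qed

lemma tail_step: "tail b B r \<Longrightarrow> E' B (New P qq cc kk) \<Longrightarrow> tail b (New P qq cc kk) (\<not> r)"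
proof -
  assume t: "tail b B r" and e: "E' B (New P qq cc kk)"
  then obtain P' qq' cc' kk' where B: "B = New P' qq' cc' kk'" "gadget E XB XC Bs P' qq'" "kk' < 2" "cc' < 2"
    "(if qq' then (b = fst (rep P') \<and> r = (kk' = 0)) \<or> (b = snd (rep P') \<and> r = (kk' = 1))
      else (b = fst (rep P') \<or> b = snd (rep P')) \<and> r \<and> kk' = 0)"
    unfolding tail_def by blast
  have n: "qq' \<and> qq \<and> P' = P \<and> cc' = cc \<and> ((kk' = 0 \<and> kk = 1) \<or> (kk' = 1 \<and> kk = 0)) \<and> gadget E XB XC Bs P' True"
    using red_E_NN e B(1) by blast
  then have b2: "(b = fst (rep P) \<and> (\<not> r) = (kk = 0)) \<or> (b = snd (rep P) \<and> (\<not> r) = (kk = 1))"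
    using B(5) by auto
  have "kk < 2" using n by auto
  then show ?thesis unfolding tail_def using n b2 B(4)
    by (intro exI[of _ P] exI[of _ qq] exI[of _ cc] exI[of _ kk]) auto
qed

lemma tail_exit: "tail b B r \<Longrightarrow> E' B (Old d) \<Longrightarrow> \<exists>T. wk V E b d (\<not> r) T \<and> T \<inter> K = {b, d}"
proof -
  assume t: "tail b B r" and e: "E' B (Old d)"
  then obtain P qq cc kk where B: "B = New P qq cc kk" "gadget E XB XC Bs P qq" "kk < 2"
    "(if qq then (b = fst (rep P) \<and> r = (kk = 0)) \<or> (b = snd (rep P) \<and> r = (kk = 1))
      else (b = fst (rep P) \<or> b = snd (rep P)) \<and> r \<and> kk = 0)"
    unfolding tail_def by blast
  have ro: "fst (rep P) \<in> K" "snd (rep P) \<in> K" "has_inner_walk E (XB - Bs) (fst (rep P)) (snd (rep P)) qq"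
    using rep_ok[OF B(2)] XCK by auto
  have e': "red_base V E XB XC Bs (New P qq cc kk) (Old d)" using e B(1) unfolding red_E_def by (cases qq) auto
  show ?thesis
  proof (rule pair_walk[OF ro(3) ro(1,2)])
    show "(b = d \<and> b \<in> K \<and> (\<not> r) = False) \<or> (b = fst (rep P) \<and> d = snd (rep P) \<and> (\<not> r) = qq) \<or>
      (b = snd (rep P) \<and> d = fst (rep P) \<and> (\<not> r) = qq)"
      using B(3,4) e' ro(1,2) by (cases qq) (auto split: if_splits)
  qed
qed

lemma bwd: "wk V' E' A B p S' \<Longrightarrow> A = Old a \<Longrightarrow> a \<in> K \<Longrightarrow>
 (\<forall>b. B = Old b \<longrightarrow> (\<exists>S. wk V E a b p S \<and> Old ` (S \<inter> K) = S' \<inter> Old ` K)) \<and>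
 ((\<forall>b. B \<noteq> Old b) \<longrightarrow> (\<exists>b q S r. wk V E a b q S \<and> Old ` (S \<inter> K) = S' \<inter> Old ` K \<and> tail b B r \<and> p = (q \<noteq> r)))"
proof (induction rule: wk.induct)
  case (w0 x)
  then show ?case by (auto intro!: exI[of _ "{a}"] wk.w0)
next
  case (wS A B p S' C)
  show ?case
  proof (cases B)
    case (Old b)
    then obtain S where S: "wk V E a b p S" "Old ` (S \<inter> K) = S' \<inter> Old ` K" using wS.IH wS.prems by blast
    show ?thesis
    proof (cases C)
      case (Old d)
      have "(E b d \<or> E d b) \<and> b \<in> K \<and> d \<in> K" using wS.hyps(2) \<open>B = Old b\<close> Old unfolding red_E_def by auto
      then have "E b d \<and> b \<in> K \<and> d \<in> K" using Esym[of d b] by blast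
      then have "wk V E a d (\<not> p) (insert d S)" using wk.wS[OF S(1)] by auto
      then show ?thesis using Old S(2) \<open>E b d \<and> b \<in> K \<and> d \<in> K\<close>
        by (intro conjI allI impI exI[of _ "insert d S"]) auto
    next
      case (New P qq cc kk)
      have "tail b C True" using tail_start wS.hyps(2) \<open>B = Old b\<close> New by simp
      then show ?thesis using New S by (intro conjI allI impI exI[of _ b] exI[of _ p] exI[of _ S] exI[of _ True]) auto
    qed
  next
    case (New P qq cc kk)
    then obtain b q S r where S: "wk V E a b q S" "Old ` (S \<inter> K) = S' \<inter> Old ` K" "tail b B r" "p = (q \<noteq> r)"
      using wS.IH wS.prems by blast
    show ?thesis
    proof (cases C)
      case (Old d)
      obtain T where T: "wk V E b d (\<not> r) T" "T \<inter> K = {b, d}" using tail_exit[OF S(3)] wS.hyps(2) Old by blast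
      have W: "wk V E a d (q \<noteq> (\<not> r)) (S \<union> T)" by (rule wk_concat[OF T(1) S(1)])
      have "b \<in> S" using wk_ends[OF S(1)] by auto
      have bdK: "b \<in> K" "d \<in> K" using T(2) by auto
      have ob: "Old b \<in> S' \<inter> Old ` K" using S(2) \<open>b \<in> S\<close> bdK by blast
      have e1: "Old ` ((S \<union> T) \<inter> K) = (S' \<inter> Old ` K) \<union> {Old b, Old d}"
        using S(2) T(2) by (simp add: Int_Un_distrib2 image_Un)
      have e2: "insert C S' \<inter> Old ` K = insert (Old d) (S' \<inter> Old ` K)" using Old bdK by auto
      have "Old ` ((S \<union> T) \<inter> K) = insert C S' \<inter> Old ` K" unfolding e1 e2 using ob by blast
      then show ?thesis using W Old S(4) by (intro conjI allI impI exI[of _ "S \<union> T"]) auto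
    next
      case (New P2 qq2 cc2 kk2)
      have "tail b C (\<not> r)" using tail_step[OF S(3)] wS.hyps(2) New by simp
      then show ?thesis using New S by (intro conjI allI impI exI[of _ b] exI[of _ q] exI[of _ S] exI[of _ "\<not> r"]) auto
    qed
  qed
qed

end

theorem mainTheorem17:
  fixes V :: "'a set" and E :: "'a \<Rightarrow> 'a \<Rightarrow> bool"
    and XB XC XR Bs Y :: "'a set" and fX :: "'a \<Rightarrow> bool"
  assumes "simple_graph V E"
    and "is_OCC V E XB XC XR"
    and "proper_2col E XB fX"
    and "Bs \<subseteq> XB"
    and "star_prop E XB XC fX Bs"
    and "Y \<subseteq> V - (XB - Bs)"
  shows "(\<exists>F. closed_odd_walk V E F \<and> set F \<inter> (V - (XB - Bs)) = Y) \<longleftrightarrow>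
         (\<exists>F'. closed_odd_walk (red_V V E XB XC Bs) (red_E V E XB XC Bs) F' \<and>
               set F' \<inter> Old ` (V - (XB - Bs)) = Old ` Y)"
proof -
  interpret setting V E XB XC XR Bs fX using assms(1-4) by unfold_locales
  have L: "(\<exists>F. closed_odd_walk V E F \<and> set F \<inter> K = Y) \<longleftrightarrow> (\<exists>a S. wk V E a a True S \<and> S \<inter> K = Y)"
    by (rule cow_iff)
  have R: "(\<exists>F'. closed_odd_walk V' E' F' \<and> set F' \<inter> Old ` K = Old ` Y) \<longleftrightarrow>
      (\<exists>a S. wk V' E' a a True S \<and> S \<inter> Old ` K = Old ` Y)"
    by (rule cow_iff)
  have "(\<exists>a S. wk V E a a True S \<and> S \<inter> K = Y) \<longleftrightarrow> (\<exists>a S. wk V' E' a a True S \<and> S \<inter> Old ` K = Old ` Y)"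
  proof
    assume "\<exists>a S. wk V E a a True S \<and> S \<inter> K = Y"
    then obtain a S where W: "wk V E a a True S" "S \<inter> K = Y" by blast
    show "\<exists>a S. wk V' E' a a True S \<and> S \<inter> Old ` K = Old ` Y"
    proof (cases "S \<inter> K = {}")
      case True
      have "S \<subseteq> V" using wk_ends[OF W(1)] by auto
      then have SX: "S \<subseteq> XB" using True by auto
      have "\<forall>x\<in>S. \<forall>y\<in>S. E x y \<longrightarrow> fX x \<noteq> fX y" using SX assms(3) unfolding proper_2col_def by blast
      from wk_color[OF W(1) this] show ?thesis by simp
    next
      case False
      then obtain k where k: "k \<in> S" "k \<in> K" by blast
      have W2: "wk V E k k True S" by (rule wk_rotate[OF W(1) k(1)])
      from fwd[OF W2 k(2)] k(2) obtain S' where "wk V' E' (Old k) (Old k) True S'" "S' \<inter> Old ` K = Old ` (S \<inter> K)"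
        by blast
      then show ?thesis using W(2) by blast
    qed
  next
    assume "\<exists>a S. wk V' E' a a True S \<and> S \<inter> Old ` K = Old ` Y"
    then obtain A S' where W: "wk V' E' A A True S'" "S' \<inter> Old ` K = Old ` Y" by blast
    show "\<exists>a S. wk V E a a True S \<and> S \<inter> K = Y"
    proof (cases "S' \<inter> Old ` K = {}")
      case True
      define f :: "'a rvert \<Rightarrow> bool" where "f x = (case x of Old _ \<Rightarrow> False | New _ _ _ k \<Rightarrow> k = 1)" for x
      have SV: "S' \<subseteq> V'" using wk_ends[OF W(1)] by auto
      have noOld: "\<And>z. Old z \<notin> S'"
      proof
        fix z assume "Old z \<in> S'"
        then have "z \<in> K" using SV Old_in_V' by blast
        then show False using True \<open>Old z \<in> S'\<close> by blast
      qed
      have "\<forall>x\<in>S'. \<forall>y\<in>S'. E' x y \<longrightarrow> f x \<noteq> f y"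
      proof (intro ballI impI)
        fix x y assume xy: "x \<in> S'" "y \<in> S'" "E' x y"
        obtain P1 q1 c1 k1 where x: "x = New P1 q1 c1 k1" using xy(1) noOld by (cases x) auto
        obtain P2 q2 c2 k2 where y: "y = New P2 q2 c2 k2" using xy(2) noOld by (cases y) auto
        show "f x \<noteq> f y" using red_E_NN[of P1 q1 c1 k1 P2 q2 c2 k2] xy(3) x y unfolding f_def by auto
      qed
      from wk_color[OF W(1) this] show ?thesis by simp
    next
      case False
      then obtain k where k: "Old k \<in> S'" "k \<in> K" by blast
      have W2: "wk V' E' (Old k) (Old k) True S'" by (rule wk_rotate[OF W(1) k(1)])
      have "\<forall>b. Old k = Old b \<longrightarrow> (\<exists>S. wk V E k b True S \<and> Old ` (S \<inter> K) = S' \<inter> Old ` K)"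
        using bwd[OF W2 refl k(2)] by (rule conjunct1)
      then have "\<exists>S. wk V E k k True S \<and> Old ` (S \<inter> K) = S' \<inter> Old ` K" by simp
      then obtain S where S: "wk V E k k True S" "Old ` (S \<inter> K) = S' \<inter> Old ` K" by blast
      have "S \<inter> K = Y" using S(2) W(2) by (simp add: inj_image_eq_iff inj_on_def)
      then show ?thesis using S(1) by blast
    qed
  qed
  then show ?thesis using L R by simp
qed

end
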